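(* For any feasible solution $(f,x_1^*,\dots,x_n^* )$ of the reward-design problem, there exists a feasible solution $(f,x_1',\dots,x_n')$ (with the same $f$) such that $x_1'\le x_2'\le\cdots\le x_n'$ and $\sum_{i=1}^n x_i'\ge\sum_{i=1}^n x_i^*$.
   Context: There are $n$ agents with types $0<q_1\le q_2\le\cdots\le q_n$, a cost constant $C>0$ and a budget $B>0$. A reward function is a map $f:[0,\infty)\to[0,\infty)$; agent $i$'s utility for producing quality $x$ is $u_i(x)=f(x)-xC/q_i$. A tuple $(f,x_1^*,\dots,x_n^* )$ is a feasible solution of the reward-design problem if for each $i$: $0\le x_i^*\le q_i$ and $u_i(x_i^* )\ge u_i(x)$ for all $x\in[0,q_i]$, and moreover $\sum_{i=1}^n f(x_i^* )\le B$. The objective is to maximize $\sum_i x_i^*$. *)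

theory Defs
  imports Complex_Main
begin

text \<open>Agents are indexed by 1..n; types q i, cost constant C, budget B.
  A reward function f maps [0,inf) to [0,inf); we model it as real => real
  required to be nonnegative on [0,inf).\<close>

definition utility :: "(real \<Rightarrow> real) \<Rightarrow> real \<Rightarrow> real \<Rightarrow> real \<Rightarrow> real" where
  "utility f C qi x = f x - x * C / qi"

definition reward_fun :: "(real \<Rightarrow> real) \<Rightarrow> bool" where
  "reward_fun f \<longleftrightarrow> (\<forall>x\<ge>0. f x \<ge> 0)"

definition feasible ::
  "nat \<Rightarrow> (nat \<Rightarrow> real) \<Rightarrow> real \<Rightarrow> real \<Rightarrow> (real \<Rightarrow> real) \<Rightarrow> (nat \<Rightarrow> real) \<Rightarrow> bool" where
  "feasible n q C B f xs \<longleftrightarrow>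
     reward_fun f \<and>
     (\<forall>i\<in>{1..n}. 0 \<le> xs i \<and> xs i \<le> q i \<and>
        (\<forall>x. 0 \<le> x \<and> x \<le> q i \<longrightarrow> utility f C (q i) (xs i) \<ge> utility f C (q i) x)) \<and>
     (\<Sum>i=1..n. f (xs i)) \<le> B"

end

theory Submission
  imports Defs
begin


lemma swap_sum:
  fixes g :: "real \<Rightarrow> real"
  assumes k: "k \<in> {1..Suc n}"
  shows "(\<Sum>i=1..Suc n. g ((xs(k := xs (Suc n), Suc n := xs k)) i)) = (\<Sum>i=1..Suc n. g (xs i))"
proof (cases "k = Suc n")
  case True then show ?thesis by simp
next
  case False
  then have kn: "k \<in> {1..n}" using k by auto
  have "(\<Sum>i=1..n. g ((xs(k := xs (Suc n), Suc n := xs k)) i))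
      = g (xs (Suc n)) + (\<Sum>i\<in>{1..n}-{k}. g ((xs(k := xs (Suc n), Suc n := xs k)) i))"
    using kn False by (subst sum.remove[OF _ kn]) auto
  also have "(\<Sum>i\<in>{1..n}-{k}. g ((xs(k := xs (Suc n), Suc n := xs k)) i)) = (\<Sum>i\<in>{1..n}-{k}. g (xs i))"
    by (rule sum.cong) auto
  also have "(\<Sum>i\<in>{1..n}-{k}. g (xs i)) = (\<Sum>i=1..n. g (xs i)) - g (xs k)"
    using sum.remove[OF _ kn, of "\<lambda>i. g (xs i)"] by simp
  finally show ?thesis using False by simp
qed

definition BR :: "(nat \<Rightarrow> real) \<Rightarrow> (real \<Rightarrow> real) \<Rightarrow> real \<Rightarrow> nat \<Rightarrow> real \<Rightarrow> bool" where
  "BR q f C i x \<longleftrightarrow> 0 \<le> x \<and> x \<le> q i \<and>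
     (\<forall>y. 0 \<le> y \<and> y \<le> q i \<longrightarrow> utility f C (q i) x \<ge> utility f C (q i) y)"

lemma BR_cong: "q i = q j \<Longrightarrow> BR q f C i x \<Longrightarrow> BR q f C j x"
  unfolding BR_def by simp

lemma mono_resp:
  assumes C: "0 < C" and qi: "0 < q i" and lt: "q i < q j"
    and bi: "BR q f C i a" and bj: "BR q f C j b"
  shows "a \<le> b"
proof (cases "b \<le> q i")
  case False then show ?thesis using bi unfolding BR_def by auto
next
  case True
  have qj: "0 < q j" using qi lt by simp
  have h1: "f a - a * C / q i \<ge> f b - b * C / q i"
    using bi bj True unfolding BR_def utility_def by auto
  have h2: "f b - b * C / q j \<ge> f a - a * C / q j"
    using bi bj lt unfolding BR_def utility_def by auto
  have e: "(b - a) * (C / q i - C / q j) = (b*C/q i - a*C/q i) - (b*C/q j - a*C/q j)"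
    using qi qj by (simp add: field_simps)
  have "(b - a) * (C / q i - C / q j) \<ge> 0" using h1 h2 unfolding e by linarith
  moreover have "C / q i - C / q j > 0" using C qi lt
    by (simp add: frac_less2)
  ultimately show ?thesis by (simp add: zero_le_mult_iff)
qed

lemma sortBR:
  fixes q :: "nat \<Rightarrow> real" and xs :: "nat \<Rightarrow> real"
  assumes C: "0 < C"
  shows "(\<forall>i\<in>{1..n}. 0 < q i) \<Longrightarrow> (\<forall>i j. 1 \<le> i \<and> i \<le> j \<and> j \<le> n \<longrightarrow> q i \<le> q j)
    \<Longrightarrow> (\<forall>i\<in>{1..n}. BR q f C i (xs i)) \<Longrightarrow>
    \<exists>ys. (\<forall>i\<in>{1..n}. BR q f C i (ys i)) \<and> (\<forall>i j. 1 \<le> i \<and> i \<le> j \<and> j \<le> n \<longrightarrow> ys i \<le> ys j)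
      \<and> (\<Sum>i=1..n. f (ys i)) = (\<Sum>i=1..n. f (xs i)) \<and> (\<Sum>i=1..n. ys i) = (\<Sum>i=1..n. xs i)
      \<and> (\<forall>i\<in>{1..n}. \<exists>j\<in>{1..n}. ys i \<le> xs j)"
proof (induction n arbitrary: xs)
  case 0
  then show ?case by (intro exI[of _ xs]) auto
next
  case (Suc n)
  define M where "M = Max (xs ` {1..Suc n})"
  have "M \<in> xs ` {1..Suc n}" unfolding M_def by (intro Max_in) auto
  then obtain k where k: "k \<in> {1..Suc n}" "xs k = M" by auto
  have kmax: "\<And>j. j \<in> {1..Suc n} \<Longrightarrow> xs j \<le> xs k"
    using k(2) unfolding M_def by auto
  define zs where "zs = xs(k := xs (Suc n), Suc n := xs k)"
  have brz: "\<forall>i\<in>{1..Suc n}. BR q f C i (zs i)"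
  proof (cases "xs k = xs (Suc n)")
    case True
    then have "zs = xs" unfolding zs_def by auto
    then show ?thesis using Suc.prems by simp
  next
    case False
    then have kn: "k \<noteq> Suc n" by auto
    then have kle: "k \<le> n" "1 \<le> k" using k by auto
    have lt: "xs (Suc n) < xs k" using False kmax[of "Suc n"] by auto
    have qeq: "q k = q (Suc n)"
    proof (rule ccontr)
      assume "q k \<noteq> q (Suc n)"
      moreover have "q k \<le> q (Suc n)" using Suc.prems(2) kle by auto
      ultimately have "q k < q (Suc n)" by simp
      then have "xs k \<le> xs (Suc n)"
        using mono_resp[OF C, of q k "Suc n" f "xs k" "xs (Suc n)"] Suc.prems kle by auto
      then show False using lt by simp
    qed
    show ?thesis
    proof
      fix i assume i: "i \<in> {1..Suc n}"
      show "BR q f C i (zs i)"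
      proof (cases "i = k \<or> i = Suc n")
        case True
        have b1: "BR q f C (Suc n) (xs (Suc n))" using Suc.prems(3) by simp
        have b2: "BR q f C k (xs k)" using Suc.prems(3) k(1) by blast
        have "zs k = xs (Suc n)" "zs (Suc n) = xs k" unfolding zs_def using kn by auto
        then show ?thesis using True b1 b2 BR_cong[of q k "Suc n"] BR_cong[of q "Suc n" k] qeq
          by auto
      next
        case False
        then show ?thesis using Suc.prems(3) i unfolding zs_def by auto
      qed
    qed
  qed
  have "\<exists>ys. (\<forall>i\<in>{1..n}. BR q f C i (ys i)) \<and> (\<forall>i j. 1 \<le> i \<and> i \<le> j \<and> j \<le> n \<longrightarrow> ys i \<le> ys j)
      \<and> (\<Sum>i=1..n. f (ys i)) = (\<Sum>i=1..n. f (zs i)) \<and> (\<Sum>i=1..n. ys i) = (\<Sum>i=1..n. zs i)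
      \<and> (\<forall>i\<in>{1..n}. \<exists>j\<in>{1..n}. ys i \<le> zs j)"
    using Suc.IH[of zs] Suc.prems(1,2) brz by auto
  then obtain ys where ys: "\<forall>i\<in>{1..n}. BR q f C i (ys i)"
    "\<forall>i j. 1 \<le> i \<and> i \<le> j \<and> j \<le> n \<longrightarrow> ys i \<le> ys j"
    "(\<Sum>i=1..n. f (ys i)) = (\<Sum>i=1..n. f (zs i))" "(\<Sum>i=1..n. ys i) = (\<Sum>i=1..n. zs i)"
    "\<forall>i\<in>{1..n}. \<exists>j\<in>{1..n}. ys i \<le> zs j" by blast
  have zle: "\<And>j. j \<in> {1..Suc n} \<Longrightarrow> zs j \<le> xs k"
    unfolding zs_def using kmax k(1) by auto
  have zsn: "zs (Suc n) = xs k" unfolding zs_def by simp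
  define ys' where "ys' = ys(Suc n := xs k)"
  have ysle: "\<And>i. i \<in> {1..n} \<Longrightarrow> ys i \<le> xs k"
    using ys(5) zle by (meson atLeastAtMost_iff le_SucI order_trans)
  show ?case
  proof (intro exI[of _ ys'] conjI)
    show "\<forall>i\<in>{1..Suc n}. BR q f C i (ys' i)"
      using ys(1) brz zsn unfolding ys'_def by (auto simp: le_Suc_eq)
    show "\<forall>i j. 1 \<le> i \<and> i \<le> j \<and> j \<le> Suc n \<longrightarrow> ys' i \<le> ys' j"
      unfolding ys'_def using ys(2) ysle by (auto simp: le_Suc_eq)
    have "(\<Sum>i=1..Suc n. f (ys' i)) = (\<Sum>i=1..Suc n. f (zs i))"
      using ys(3) zsn unfolding ys'_def by simp
    also have "\<dots> = (\<Sum>i=1..Suc n. f (xs i))" unfolding zs_def by (rule swap_sum[OF k(1)])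
    finally show "(\<Sum>i=1..Suc n. f (ys' i)) = (\<Sum>i=1..Suc n. f (xs i))" .
    have "(\<Sum>i=1..Suc n. ys' i) = (\<Sum>i=1..Suc n. zs i)"
      using ys(4) zsn unfolding ys'_def by simp
    also have "\<dots> = (\<Sum>i=1..Suc n. xs i)" unfolding zs_def by (rule swap_sum[OF k(1), of "\<lambda>x. x"])
    finally show "(\<Sum>i=1..Suc n. ys' i) = (\<Sum>i=1..Suc n. xs i)" .
    show "\<forall>i\<in>{1..Suc n}. \<exists>j\<in>{1..Suc n}. ys' i \<le> xs j"
      unfolding ys'_def using ysle k(1) by (auto intro!: bexI[of _ k])
  qed
qed

theorem lemma1:
  fixes n :: nat and q :: "nat \<Rightarrow> real" and C B :: real
    and f :: "real \<Rightarrow> real" and xs :: "nat \<Rightarrow> real"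
  assumes q_pos: "\<forall>i\<in>{1..n}. 0 < q i"
    and q_mono: "\<forall>i j. 1 \<le> i \<and> i \<le> j \<and> j \<le> n \<longrightarrow> q i \<le> q j"
    and C_pos: "0 < C" and B_pos: "0 < B"
    and feas: "feasible n q C B f xs"
  shows "\<exists>xs'. feasible n q C B f xs' \<and>
           (\<forall>i j. 1 \<le> i \<and> i \<le> j \<and> j \<le> n \<longrightarrow> xs' i \<le> xs' j) \<and>
           (\<Sum>i=1..n. xs' i) \<ge> (\<Sum>i=1..n. xs i)"
proof -
  have "\<forall>i\<in>{1..n}. BR q f C i (xs i)" using feas unfolding feasible_def BR_def by blast
  from sortBR[OF C_pos q_pos q_mono this] obtain ys where
    ys: "\<forall>i\<in>{1..n}. BR q f C i (ys i)" "\<forall>i j. 1 \<le> i \<and> i \<le> j \<and> j \<le> n \<longrightarrow> ys i \<le> ys j"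
      "(\<Sum>i=1..n. f (ys i)) = (\<Sum>i=1..n. f (xs i))" "(\<Sum>i=1..n. ys i) = (\<Sum>i=1..n. xs i)"
    by blast
  have "feasible n q C B f ys" using feas ys(1,3) unfolding feasible_def BR_def by auto
  then show ?thesis using ys by auto
qed

end
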